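(* Let $X$ be a metric space with bounded geometry which is a coarse disjoint union of a sequence of asymptotic expanders. Then $X$ is not uniformly locally amenable. In particular, $X$ does not have Property A.
   Context: Bounded geometry: $\sup_x|B(x,R)|<\infty$ for all $R>0$. A coarse disjoint union of finite metric spaces $(X_n,d_n)$ is $X=\bigsqcup_nX_n$ with a metric restricting to $d_n$ on each $X_n$ and with $d(X_n,X_m)\to\infty$ as $n+m\to\infty$, $m\neq n$. For $A$ in a metric space, $\partial_RA=\{x\notin A: d(x,A)\leq R\}$. A sequence of finite metric spaces $\{X_n\}$ with $|X_n|\to\infty$ is a sequence of asymptotic expanders if for every $\alpha>0$ there exist $c\in(0,1)$, $R>0$ such that for all $n$ and all $A\subseteq X_n$ with $\alpha|X_n|\leq|A|\leq|X_n|/2$, $|\partial_RA|>c|A|$. $X$ is uniformly locally amenable if for all $R,\varepsilon>0$ there is $S>0$ such that for every finite $F\subseteq X$ there is $E\subseteq X$ with $\mathrm{diam}(E)\leq S$ and $|\partial_R(E)\cap F|<\varepsilon|E\cap F|$. Property A is Yu's property; for bounded geometry spaces it is equivalent to: for all $R,\varepsilon>0$ there are $\xi:X\to\ell^2(X)$ and $S>0$ with $\|\xi_x\|=1$, $\|\xi_x-\xi_y\|<\varepsilon$ whenever $d(x,y)<R$, and $\mathrm{supp}(\xi_x)\subseteq B(x,S)$. *)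

theory Defs
  imports "HOL-Analysis.Analysis"
begin

text \<open>The metric space X is the whole type 'a (class metric_space).\<close>

definition bounded_geometry :: "'a::metric_space itself \<Rightarrow> bool" where
  "bounded_geometry _ \<longleftrightarrow>
     (\<forall>R>0. \<exists>N::nat. \<forall>x::'a. finite (cball x R) \<and> card (cball x R) \<le> N)"

text \<open>R-boundary of A inside the ambient set S: points of S outside A at distance at most R from A
  (the distance to the empty set is +infinity, so the boundary of the empty set is empty).\<close>
definition rbdry :: "'a::metric_space set \<Rightarrow> real \<Rightarrow> 'a set \<Rightarrow> 'a set" where
  "rbdry S R A = {x \<in> S. x \<notin> A \<and> A \<noteq> {} \<and> infdist x A \<le> R}"

definition coarse_disjoint_union :: "(nat \<Rightarrow> 'a::metric_space set) \<Rightarrow> bool" where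
  "coarse_disjoint_union Xs \<longleftrightarrow>
     (\<Union>n. Xs n) = UNIV \<and> (\<forall>n. finite (Xs n)) \<and>
     (\<forall>n m. n \<noteq> m \<longrightarrow> Xs n \<inter> Xs m = {}) \<and>
     (\<forall>D::real. \<exists>N. \<forall>n m. n \<noteq> m \<and> n + m \<ge> N \<longrightarrow>
         (\<forall>x\<in>Xs n. \<forall>y\<in>Xs m. D \<le> dist x y))"

definition asymptotic_expanders :: "(nat \<Rightarrow> 'a::metric_space set) \<Rightarrow> bool" where
  "asymptotic_expanders Xs \<longleftrightarrow>
     (\<forall>n. finite (Xs n)) \<and>
     filterlim (\<lambda>n. card (Xs n)) at_top sequentially \<and>
     (\<forall>\<alpha>::real>0. \<exists>c::real. 0 < c \<and> c < 1 \<and> (\<exists>R::real>0. \<forall>n. \<forall>A. A \<subseteq> Xs n \<longrightarrow>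
        \<alpha> * real (card (Xs n)) \<le> real (card A) \<longrightarrow> real (card A) \<le> real (card (Xs n)) / 2 \<longrightarrow>
        real (card (rbdry (Xs n) R A)) > c * real (card A)))"

definition uniformly_locally_amenable :: "'a::metric_space itself \<Rightarrow> bool" where
  "uniformly_locally_amenable _ \<longleftrightarrow>
     (\<forall>R>0. \<forall>\<epsilon>>0. \<exists>S>0. \<forall>F::'a set. finite F \<and> F \<noteq> {} \<longrightarrow>
        (\<exists>E. bounded E \<and> diameter E \<le> S \<and>
             real (card (rbdry UNIV R E \<inter> F)) < \<epsilon> * real (card (E \<inter> F))))"

definition l2norm :: "('a \<Rightarrow> real) \<Rightarrow> real" where
  "l2norm f = sqrt (infsum (\<lambda>z. (f z)\<^sup>2) UNIV)"

definition property_A :: "'a::metric_space itself \<Rightarrow> bool" where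
  "property_A _ \<longleftrightarrow>
     (\<forall>R>0. \<forall>\<epsilon>>0. \<exists>(\<xi>::'a \<Rightarrow> 'a \<Rightarrow> real) S. S > 0 \<and>
        (\<forall>x. (\<lambda>z. (\<xi> x z)\<^sup>2) summable_on UNIV \<and> l2norm (\<xi> x) = 1) \<and>
        (\<forall>x y. dist x y < R \<longrightarrow> l2norm (\<lambda>z. \<xi> x z - \<xi> y z) < \<epsilon>) \<and>
        (\<forall>x. {z. \<xi> x z \<noteq> 0} \<subseteq> ball x S))"

end

theory Submission
  imports Defs
begin

lemma infdist_finite_attained:
  fixes x :: "'a::metric_space"
  assumes "finite E" "E \<noteq> {}"
  shows "\<exists>y\<in>E. infdist x E = dist x y"
proof -
  define m where "m = Min (dist x ` E)"
  have "m \<in> dist x ` E" using assms unfolding m_def by (intro Min_in) auto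
  then obtain y where y: "y \<in> E" "m = dist x y" by auto
  have "\<forall>z\<in>E. m \<le> dist x z" using assms unfolding m_def by auto
  hence "m \<le> infdist x E" using assms by (auto simp: infdist_notempty intro!: cINF_greatest)
  moreover have "infdist x E \<le> m" using y infdist_le by metis
  ultimately show ?thesis using y by auto
qed

lemma diameter_le_metric:
  fixes S :: "'a::metric_space set"
  assumes "S \<noteq> {}" "\<And>x y. x \<in> S \<Longrightarrow> y \<in> S \<Longrightarrow> dist x y \<le> d"
  shows "diameter S \<le> d"
  using assms by (auto simp: diameter_def intro!: cSUP_least)

lemma not_ula:
  fixes Xs :: "nat \<Rightarrow> 'a::metric_space set"
  assumes bg: "bounded_geometry TYPE('a)" and ae: "asymptotic_expanders Xs"
  shows "\<not> uniformly_locally_amenable TYPE('a)"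
proof
  assume ula: "uniformly_locally_amenable TYPE('a)"
  have finX: "\<And>n. finite (Xs n)" using ae unfolding asymptotic_expanders_def by auto
  obtain c R where c: "0 < c" and R: "R > 0" and
    ex: "\<And>n A. A \<subseteq> Xs n \<Longrightarrow> (1/4) * real (card (Xs n)) \<le> real (card A) \<Longrightarrow>
        real (card A) \<le> real (card (Xs n)) / 2 \<Longrightarrow> real (card (rbdry (Xs n) R A)) > c * real (card A)"
  proof -
    have "(1/4::real) > 0" by simp
    then obtain c where "c > 0" "\<exists>R>0. \<forall>n A. A \<subseteq> Xs n \<longrightarrow>
        (1/4) * real (card (Xs n)) \<le> real (card A) \<longrightarrow> real (card A) \<le> real (card (Xs n)) / 2 \<longrightarrow>
        real (card (rbdry (Xs n) R A)) > c * real (card A)"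
      using ae unfolding asymptotic_expanders_def by blast
    then obtain R where "R > 0" "\<forall>n A. A \<subseteq> Xs n \<longrightarrow>
        (1/4) * real (card (Xs n)) \<le> real (card A) \<longrightarrow> real (card A) \<le> real (card (Xs n)) / 2 \<longrightarrow>
        real (card (rbdry (Xs n) R A)) > c * real (card A)" by blast
    thus ?thesis using that[of c R] \<open>c > 0\<close> by blast
  qed
  have H: "\<forall>R>0. \<forall>\<epsilon>>0. \<exists>S>0. \<forall>F::'a set. finite F \<and> F \<noteq> {} \<longrightarrow>
        (\<exists>E. bounded E \<and> diameter E \<le> S \<and>
             real (card (rbdry UNIV R E \<inter> F)) < \<epsilon> * real (card (E \<inter> F)))"
      using ula unfolding uniformly_locally_amenable_def by assumption
  have "\<exists>S>0. \<forall>F::'a set. finite F \<and> F \<noteq> {} \<longrightarrow>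
        (\<exists>E. bounded E \<and> diameter E \<le> S \<and>
             real (card (rbdry UNIV R E \<inter> F)) < c * real (card (E \<inter> F)))"
      by (rule H[rule_format, OF R c])
  then obtain S where SU: "S > 0 \<and> (\<forall>F::'a set. finite F \<and> F \<noteq> {} \<longrightarrow>
        (\<exists>E. bounded E \<and> diameter E \<le> S \<and>
             real (card (rbdry UNIV R E \<inter> F)) < c * real (card (E \<inter> F))))" ..
  have S: "S > 0" using SU by (rule conjunct1)
  have U0: "\<forall>F::'a set. finite F \<and> F \<noteq> {} \<longrightarrow>
        (\<exists>E. bounded E \<and> diameter E \<le> S \<and>
             real (card (rbdry UNIV R E \<inter> F)) < c * real (card (E \<inter> F)))" using SU by (rule conjunct2)
  have U: "\<exists>E. bounded E \<and> diameter E \<le> S \<and>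
          real (card (rbdry UNIV R E \<inter> F)) < c * real (card (E \<inter> F))"
    if "finite F" "F \<noteq> {}" for F :: "'a set" using U0 that by blast
  obtain N :: nat where N: "\<And>x::'a. finite (cball x S) \<and> card (cball x S) \<le> N"
  proof -
    have "\<forall>R>0. \<exists>N::nat. \<forall>x::'a. finite (cball x R) \<and> card (cball x R) \<le> N"
      using bg unfolding bounded_geometry_def by assumption
    hence "\<exists>N::nat. \<forall>x::'a. finite (cball x S) \<and> card (cball x S) \<le> N" using S by blast
    then obtain N0 :: nat where "\<forall>x::'a. finite (cball x S) \<and> card (cball x S) \<le> N0" by blast
    thus ?thesis using that[of N0] by blast
  qed
  have "filterlim (\<lambda>n. card (Xs n)) at_top sequentially"
    using ae unfolding asymptotic_expanders_def by auto
  hence "eventually (\<lambda>n. card (Xs n) \<ge> 4*N+4) sequentially"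
    by (simp add: filterlim_at_top)
  then obtain n where n: "card (Xs n) \<ge> 4*N+4" by (meson eventually_sequentially order_refl)
  define X where "X = Xs n"
  have finX': "finite X" using finX X_def by auto
  define good where "good A \<longleftrightarrow> A \<subseteq> X \<and> real (card (rbdry X R A)) \<le> c * real (card A)" for A
  have step: "\<exists>A'. good A' \<and> card A < card A' \<and> card A' \<le> card A + N"
    if gA: "good A" and lt: "card A < card X" for A
  proof -
    have AX: "A \<subseteq> X" using gA good_def by auto
    define F where "F = X - A"
    have finF: "finite F" using finX' F_def by auto
    have Fne: "F \<noteq> {}" using lt AX F_def finX' by (metis Diff_eq_empty_iff less_irrefl subset_antisym)
    obtain E where Eb: "bounded E" and Ed: "diameter E \<le> S" and
      Ec: "real (card (rbdry UNIV R E \<inter> F)) < c * real (card (E \<inter> F))"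
      using U[OF finF Fne] by blast
    define B where "B = E \<inter> F"
    have Bne: "B \<noteq> {}" using Ec B_def by (metis card.empty mult_zero_right not_less of_nat_0 of_nat_0_le_iff)
    then obtain e where e: "e \<in> B" by auto
    have "B \<subseteq> cball e S"
    proof
      fix y assume "y \<in> B"
      hence "dist e y \<le> diameter E" using e B_def Eb diameter_bounded_bound by auto
      thus "y \<in> cball e S" using Ed by auto
    qed
    hence cardB: "card B \<le> N" using N[of e] by (meson card_mono order_trans)
    have finB: "finite B" using finF B_def by auto
    define A' where "A' = A \<union> B"
    have disj: "A \<inter> B = {}" using B_def F_def by auto
    have finA: "finite A" using AX finX' finite_subset by auto
    have cardA': "card A' = card A + card B" using A'_def disj finA finB card_Un_disjoint by auto
    have cB0: "card B > 0" using Bne finB by auto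
    have sub: "rbdry X R A' \<subseteq> rbdry X R A \<union> (rbdry UNIV R E \<inter> F)"
    proof
      fix x assume "x \<in> rbdry X R A'"
      hence x: "x \<in> X" "x \<notin> A" "x \<notin> B" "infdist x (A \<union> B) \<le> R"
        unfolding rbdry_def A'_def by auto
      have xF: "x \<in> F" using x F_def by auto
      have xE: "x \<notin> E" using xF x B_def by auto
      have Ene: "E \<noteq> {}" using Bne B_def by auto
      have iB: "infdist x E \<le> infdist x B" using Bne B_def infdist_mono by (metis inf_le1)
      show "x \<in> rbdry X R A \<union> (rbdry UNIV R E \<inter> F)"
      proof (cases "A = {}")
        case True
        thus ?thesis using x xF xE Ene iB unfolding rbdry_def by auto
      next
        case False
        hence "min (infdist x A) (infdist x B) \<le> R" using x infdist_Un_min[OF False Bne] by auto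
        thus ?thesis using x xF xE Ene iB False unfolding rbdry_def by (auto simp: min_le_iff_disj)
      qed
    qed
    have fin1: "finite (rbdry X R A)" using finX' unfolding rbdry_def by auto
    have fin2: "finite (rbdry UNIV R E \<inter> F)" using finF by auto
    have "card (rbdry X R A') \<le> card (rbdry X R A) + card (rbdry UNIV R E \<inter> F)"
      by (meson card_Un_le card_mono fin1 fin2 finite_UnI le_trans sub)
    hence "real (card (rbdry X R A')) \<le> real (card (rbdry X R A)) + real (card (rbdry UNIV R E \<inter> F))"
      by linarith
    also have "\<dots> \<le> c * real (card A) + c * real (card B)"
      using gA good_def Ec B_def by auto
    also have "\<dots> = c * real (card A')" using cardA' by (simp add: algebra_simps)
    finally have "good A'" unfolding good_def using AX A'_def B_def F_def by auto
    thus ?thesis using cardA' cB0 cardB by auto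
  qed
  define t where "t = nat \<lceil>real (card X) / 4\<rceil>"
  have m4: "real (card X) \<ge> 4" using n X_def by auto
  have "of_int \<lceil>real (card X) / 4\<rceil> < real (card X) / 4 + 1" by linarith
  hence "of_int \<lceil>real (card X) / 4\<rceil> < real (card X)" using m4 by linarith
  hence ci: "\<lceil>real (card X) / 4\<rceil> < int (card X)" by linarith
  have tX: "t < card X" unfolding t_def using ci by linarith
  have ind: "k \<le> t \<Longrightarrow> \<exists>A. good A \<and> k \<le> card A \<and> card A \<le> k + N" for k
  proof (induction k)
    case 0
    have "good {}" unfolding good_def rbdry_def by auto
    thus ?case by force
  next
    case (Suc k)
    then obtain A where A: "good A" "k \<le> card A" "card A \<le> k + N" by auto
    show ?case
    proof (cases "Suc k \<le> card A")
      case True thus ?thesis using A by auto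
    next
      case False
      hence "card A = k" using A by auto
      hence "card A < card X" using Suc tX by auto
      then obtain A' where "good A'" "card A < card A'" "card A' \<le> card A + N" using step A by blast
      thus ?thesis using \<open>card A = k\<close> by auto
    qed
  qed
  obtain A where A: "good A" "t \<le> card A" "card A \<le> t + N" using ind by blast
  have "real (card X) / 4 \<le> real t" unfolding t_def by linarith
  hence l1: "(1/4) * real (card X) \<le> real (card A)" using A by auto
  have "real t < real (card X) / 4 + 1" unfolding t_def by linarith
  moreover have a1: "real (card A) \<le> real t + real N" using A(3) by (metis of_nat_add of_nat_le_iff)
  moreover have "real (4*N+4) \<le> real (card X)" using n X_def of_nat_le_iff by blast
  ultimately have l2: "real (card A) \<le> real (card X) / 2" by simp
  have "real (card (rbdry X R A)) > c * real (card A)" using ex[of A n] A(1) l1 l2 X_def good_def by auto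
  thus False using A(1) good_def by auto
qed


lemma amgm_pt:
  fixes a b d :: real
  assumes d: "d > 0"
  shows "\<bar>a\<^sup>2 - b\<^sup>2\<bar> \<le> (a - b)\<^sup>2 / (2*d) + d * (a\<^sup>2 + b\<^sup>2)"
proof -
  define u where "u = a - b"
  define v where "v = a + b"
  have e: "\<bar>a\<^sup>2 - b\<^sup>2\<bar> = \<bar>u\<bar> * \<bar>v\<bar>" unfolding u_def v_def
    by (simp add: power2_eq_square abs_mult[symmetric] algebra_simps)
  have sq: "(\<bar>u\<bar> - d * \<bar>v\<bar>)\<^sup>2 = u\<^sup>2 + d\<^sup>2 * v\<^sup>2 - 2 * d * (\<bar>u\<bar> * \<bar>v\<bar>)"
    by (simp add: power2_eq_square algebra_simps)
  have "0 \<le> (\<bar>u\<bar> - d * \<bar>v\<bar>)\<^sup>2" by simp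
  hence k: "2 * d * (\<bar>u\<bar> * \<bar>v\<bar>) \<le> u\<^sup>2 + d\<^sup>2 * v\<^sup>2" using sq by linarith
  have "\<bar>u\<bar> * \<bar>v\<bar> = (2 * d * (\<bar>u\<bar> * \<bar>v\<bar>)) / (2 * d)" using d by simp
  also have "\<dots> \<le> (u\<^sup>2 + d\<^sup>2 * v\<^sup>2) / (2 * d)" using k d by (intro divide_right_mono) auto
  also have "\<dots> = u\<^sup>2 / (2*d) + d * v\<^sup>2 / 2" using d by (simp add: add_divide_distrib power2_eq_square)
  finally have uv: "\<bar>u\<bar> * \<bar>v\<bar> \<le> u\<^sup>2 / (2*d) + d * v\<^sup>2 / 2" .
  have vb: "v\<^sup>2 \<le> 2 * (a\<^sup>2 + b\<^sup>2)" unfolding v_def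
    using sum_squares_ge_zero[of "a-b" 0] by (simp add: power2_eq_square algebra_simps)
  have "d * v\<^sup>2 \<le> d * (2 * (a\<^sup>2 + b\<^sup>2))" using mult_left_mono[OF vb, of d] d by simp
  hence "d * v\<^sup>2 / 2 \<le> d * (a\<^sup>2 + b\<^sup>2)" by (simp add: algebra_simps)
  thus ?thesis using e uv unfolding u_def by linarith
qed
lemma amgm_sum:
  fixes a b :: "'b \<Rightarrow> real"
  assumes K: "finite K" and a: "(\<Sum>z\<in>K. (a z)\<^sup>2) = 1" and b: "(\<Sum>z\<in>K. (b z)\<^sup>2) = 1"
    and ab: "(\<Sum>z\<in>K. (a z - b z)\<^sup>2) < d\<^sup>2" and d: "d > 0"
  shows "(\<Sum>z\<in>K. \<bar>(a z)\<^sup>2 - (b z)\<^sup>2\<bar>) \<le> 3 * d"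
proof -
  have "(\<Sum>z\<in>K. \<bar>(a z)\<^sup>2 - (b z)\<^sup>2\<bar>) \<le> (\<Sum>z\<in>K. (a z - b z)\<^sup>2 / (2*d) + d * ((a z)\<^sup>2 + (b z)\<^sup>2))"
    by (rule sum_mono) (rule amgm_pt[OF d])
  also have "\<dots> = (\<Sum>z\<in>K. (a z - b z)\<^sup>2) / (2*d) + d * ((\<Sum>z\<in>K. (a z)\<^sup>2) + (\<Sum>z\<in>K. (b z)\<^sup>2))"
    by (simp add: sum.distrib sum_divide_distrib sum_distrib_left[symmetric])
  also have "\<dots> \<le> d\<^sup>2 / (2*d) + 2 * d" using a b ab d by (simp add: divide_right_mono)
  also have "\<dots> \<le> 3 * d" using d by (simp add: power2_eq_square)
  finally show ?thesis .
qed

lemma infsum_finite_support: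
  fixes g :: "'b \<Rightarrow> real"
  assumes "finite K" "\<And>z. z \<notin> K \<Longrightarrow> g z = 0"
  shows "infsum g UNIV = sum g K"
proof -
  have "infsum g UNIV = infsum g K" by (rule infsum_cong_neutral) (use assms in auto)
  thus ?thesis using assms by simp
qed

lemma integrable_Ioc: "integrable lborel (indicator {a<..b::real} :: real \<Rightarrow> real)"
proof (cases "a \<le> b")
  case True thus ?thesis by (intro integrable_real_indicator) auto
next
  case False hence "{a<..b} = {}" by auto
  thus ?thesis by simp
qed

lemma measure_Ioc_max: "measure lborel {a<..b::real} = max (b - a) 0"
proof (cases "a \<le> b")
  case True thus ?thesis by simp
next
  case False hence "{a<..b} = {}" by auto
  thus ?thesis using False by simp
qed

lemma integral_Ioc: "integral\<^sup>L lborel (indicator {a<..b::real} :: real \<Rightarrow> real) = max (b - a) 0"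
proof (cases "a \<le> b")
  case True thus ?thesis by simp
next
  case False hence "{a<..b} = {}" by auto
  thus ?thesis using False by simp
qed

lemma sum_ind_card:
  assumes "finite A"
  shows "(\<Sum>x\<in>A. indicator B x :: real) = real (card (A \<inter> B))"
proof -
  have "(\<Sum>x\<in>A. indicator B x :: real) = (\<Sum>x\<in>A. real (indicator B x :: nat))"
    by (rule sum.cong) (auto simp: indicator_def)
  also have "\<dots> = real (\<Sum>x\<in>A. indicator B x :: nat)" by (simp add: of_nat_sum)
  also have "\<dots> = real (card (A \<inter> B))" using sum_indicator_eq_card[OF assms, of B] by simp
  finally show ?thesis .
qed

lemma bg_finite:
  fixes x :: "'a::metric_space"
  assumes "bounded_geometry TYPE('a)" "r > 0"
  shows "finite (cball x r)"
proof -
  have "\<forall>R>0. \<exists>N::nat. \<forall>x::'a. finite (cball x R) \<and> card (cball x R) \<le> N"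
    using assms(1) unfolding bounded_geometry_def by assumption
  thus ?thesis using assms(2) by blast
qed

lemma A_imp_ula:
  assumes bg: "bounded_geometry TYPE('a::metric_space)" and pa: "property_A TYPE('a)"
  shows "uniformly_locally_amenable TYPE('a)"
  unfolding uniformly_locally_amenable_def
proof (intro allI impI)
  fix R \<epsilon> :: real assume R: "R > 0" and e: "\<epsilon> > 0"
  have "\<forall>R>0. \<exists>N::nat. \<forall>x::'a. finite (cball x R) \<and> card (cball x R) \<le> N"
    using bg unfolding bounded_geometry_def by assumption
  hence "\<exists>N::nat. \<forall>x::'a. finite (cball x R) \<and> card (cball x R) \<le> N" using R by blast
  then obtain NR :: nat where NR: "\<forall>x::'a. finite (cball x R) \<and> card (cball x R) \<le> NR" by blast
  define \<delta> where "\<delta> = \<epsilon> / (4 * (real NR + 1))"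
  have d0: "\<delta> > 0" unfolding \<delta>_def using e by auto
  have PA: "\<forall>R>0. \<forall>\<epsilon>>0. \<exists>(\<xi>::'a \<Rightarrow> 'a \<Rightarrow> real) S. S > 0 \<and>
        (\<forall>x. (\<lambda>z. (\<xi> x z)\<^sup>2) summable_on UNIV \<and> l2norm (\<xi> x) = 1) \<and>
        (\<forall>x y. dist x y < R \<longrightarrow> l2norm (\<lambda>z. \<xi> x z - \<xi> y z) < \<epsilon>) \<and>
        (\<forall>x. {z. \<xi> x z \<noteq> 0} \<subseteq> ball x S)"
    using pa unfolding property_A_def by assumption
  have "\<exists>(\<xi>::'a \<Rightarrow> 'a \<Rightarrow> real) S. S > 0 \<and>
        (\<forall>x. (\<lambda>z. (\<xi> x z)\<^sup>2) summable_on UNIV \<and> l2norm (\<xi> x) = 1) \<and>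
        (\<forall>x y. dist x y < R + 1 \<longrightarrow> l2norm (\<lambda>z. \<xi> x z - \<xi> y z) < \<delta>) \<and>
        (\<forall>x. {z. \<xi> x z \<noteq> 0} \<subseteq> ball x S)"
    using R d0 by (intro PA[rule_format]) auto
  then obtain \<xi> :: "'a \<Rightarrow> 'a \<Rightarrow> real" and S where S: "S > 0"
    and nrm: "\<And>x. l2norm (\<xi> x) = 1"
    and cls: "\<And>x y. dist x y < R + 1 \<Longrightarrow> l2norm (\<lambda>z. \<xi> x z - \<xi> y z) < \<delta>"
    and spt: "\<And>x. {z. \<xi> x z \<noteq> 0} \<subseteq> ball x S"
    by blast
  have finb: "finite (ball x S)" for x :: 'a
    using bg_finite[OF bg S, of x] by (meson ball_subset_cball finite_subset)
  define f where "f x z = (\<xi> x z)\<^sup>2" for x z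
  have f0: "f x z \<ge> 0" for x z unfolding f_def by simp
  have fsupp: "dist x z < S" if "f x z \<noteq> 0" for x z
    using that spt[of x] unfolding f_def by auto
  have sum1: "sum (f x) K = 1" if "finite K" "ball x S \<subseteq> K" for x K
  proof -
    have "infsum (\<lambda>z. (\<xi> x z)\<^sup>2) UNIV = sum (\<lambda>z. (\<xi> x z)\<^sup>2) K"
      by (rule infsum_finite_support) (use that spt[of x] in auto)
    moreover have "sqrt (infsum (\<lambda>z. (\<xi> x z)\<^sup>2) UNIV) = 1" using nrm[of x] unfolding l2norm_def .
    ultimately show ?thesis unfolding f_def by simp
  qed
  have diffb: "(\<Sum>z\<in>Z. \<bar>f y z - f x z\<bar>) \<le> 3 * \<delta>" if "finite Z" "dist x y < R + 1" for Z x y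
  proof -
    define K where "K = ball x S \<union> ball y S"
    have K: "finite K" unfolding K_def using finb by auto
    have zero: "\<xi> x z = 0" "\<xi> y z = 0" if "z \<notin> K" for z
      using that spt[of x] spt[of y] unfolding K_def by auto
    have "(\<Sum>z\<in>Z. \<bar>f y z - f x z\<bar>) \<le> (\<Sum>z\<in>Z \<union> K. \<bar>f y z - f x z\<bar>)"
      by (rule sum_mono2) (use that K in auto)
    also have "\<dots> = (\<Sum>z\<in>K. \<bar>f y z - f x z\<bar>)"
      by (rule sum.mono_neutral_right) (use that K zero in \<open>auto simp: f_def\<close>)
    also have "\<dots> = (\<Sum>z\<in>K. \<bar>(\<xi> x z)\<^sup>2 - (\<xi> y z)\<^sup>2\<bar>)" unfolding f_def by (simp add: abs_minus_commute)
    also have "\<dots> \<le> 3 * \<delta>"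
    proof (rule amgm_sum[OF K _ _ _ d0])
      show "(\<Sum>z\<in>K. (\<xi> x z)\<^sup>2) = 1" using sum1[OF K, of x] unfolding K_def f_def by auto
      show "(\<Sum>z\<in>K. (\<xi> y z)\<^sup>2) = 1" using sum1[OF K, of y] unfolding K_def f_def by auto
      have "infsum (\<lambda>z. (\<xi> x z - \<xi> y z)\<^sup>2) UNIV = (\<Sum>z\<in>K. (\<xi> x z - \<xi> y z)\<^sup>2)"
        by (rule infsum_finite_support) (use K zero in auto)
      moreover have "sqrt (infsum (\<lambda>z. (\<xi> x z - \<xi> y z)\<^sup>2) UNIV) < \<delta>"
        using cls[OF that(2)] unfolding l2norm_def .
      ultimately have lt: "sqrt (\<Sum>z\<in>K. (\<xi> x z - \<xi> y z)\<^sup>2) < \<delta>" by simp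
      have nn: "0 \<le> (\<Sum>z\<in>K. (\<xi> x z - \<xi> y z)\<^sup>2)" by (intro sum_nonneg) auto
      show "(\<Sum>z\<in>K. (\<xi> x z - \<xi> y z)\<^sup>2) < \<delta>\<^sup>2"
        using lt nn d0 by (metis real_sqrt_less_iff real_sqrt_pow2 real_sqrt_power real_sqrt_abs abs_of_pos)
    qed
    finally show ?thesis .
  qed
  show "\<exists>S'>0. \<forall>F::'a set. finite F \<and> F \<noteq> {} \<longrightarrow>
        (\<exists>E. bounded E \<and> diameter E \<le> S' \<and>
             real (card (rbdry UNIV R E \<inter> F)) < \<epsilon> * real (card (E \<inter> F)))"
  proof (intro exI[of _ "2*S"] conjI allI impI)
    show "2 * S > 0" using S by simp
    fix F :: "'a set" assume FF: "finite F \<and> F \<noteq> {}"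
    hence finF: "finite F" and Fne: "F \<noteq> {}" by auto
    define Z where "Z = (\<Union>x\<in>F. \<Union>y\<in>cball x R. ball y S)"
    have finZ: "finite Z" unfolding Z_def using finF finb NR by auto
    have ballZ: "ball x S \<subseteq> Z" if "x \<in> F" for x
      unfolding Z_def using that R by (auto intro!: bexI[of _ x])
    define E where "E z t = {x. t \<in> {0<..f x z}}" for z t
    define ind where "ind a b t = (indicator {a<..b} t :: real)" for a b t :: real
    define L where "L t = (\<Sum>z\<in>Z. \<Sum>x\<in>F. (\<epsilon> * ind 0 (f x z) t - (\<Sum>y\<in>cball x R. ind (f x z) (f y z) t)))" for t
    have Esub: "E z t \<subseteq> ball z S" for z t
    proof
      fix x assume "x \<in> E z t"
      hence "f x z \<noteq> 0" unfolding E_def by auto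
      thus "x \<in> ball z S" using fsupp[of x z] by (simp add: dist_commute)
    qed
    have finE: "finite (E z t)" for z t using Esub finb finite_subset by metis
    have pw: "\<epsilon> * real (card (E z t \<inter> F)) - real (card (rbdry UNIV R (E z t) \<inter> F))
        \<ge> (\<Sum>x\<in>F. (\<epsilon> * ind 0 (f x z) t - (\<Sum>y\<in>cball x R. ind (f x z) (f y z) t)))" for z t
    proof -
      have c1: "real (card (E z t \<inter> F)) = (\<Sum>x\<in>F. ind 0 (f x z) t)"
      proof -
        have "(\<Sum>x\<in>F. ind 0 (f x z) t) = (\<Sum>x\<in>F. indicator (E z t) x)"
          by (rule sum.cong) (auto simp: ind_def E_def indicator_def)
        also have "\<dots> = real (card (F \<inter> E z t))" by (rule sum_ind_card[OF finF])
        finally show ?thesis by (simp add: Int_commute)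
      qed
      have c2: "real (card (rbdry UNIV R (E z t) \<inter> F)) \<le> (\<Sum>x\<in>F. \<Sum>y\<in>cball x R. ind (f x z) (f y z) t)"
      proof -
        have "real (card (rbdry UNIV R (E z t) \<inter> F)) = (\<Sum>x\<in>F. indicator (rbdry UNIV R (E z t)) x)"
          using sum_ind_card[OF finF] by (simp add: Int_commute)
        also have "\<dots> \<le> (\<Sum>x\<in>F. \<Sum>y\<in>cball x R. ind (f x z) (f y z) t)"
        proof (rule sum_mono)
          fix x assume "x \<in> F"
          have nn: "0 \<le> ind a b t" for a b unfolding ind_def by simp
          show "indicator (rbdry UNIV R (E z t)) x \<le> (\<Sum>y\<in>cball x R. ind (f x z) (f y z) t)"
          proof (cases "x \<in> rbdry UNIV R (E z t)")
            case False thus ?thesis using nn by (simp add: sum_nonneg)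
          next
            case True
            hence xE: "x \<notin> E z t" and Ene: "E z t \<noteq> {}" and xi: "infdist x (E z t) \<le> R"
              unfolding rbdry_def by auto
            obtain y where yE: "y \<in> E z t" and yd: "infdist x (E z t) = dist x y"
              using infdist_finite_attained[OF finE Ene] by blast
            have ty: "0 < t" "t \<le> f y z" using yE unfolding E_def by auto
            have tx: "f x z < t" using xE ty unfolding E_def by auto
            have yc: "y \<in> cball x R" using yd xi by simp
            have "ind (f x z) (f y z) t = 1" unfolding ind_def using tx ty by simp
            hence "1 \<le> (\<Sum>y\<in>cball x R. ind (f x z) (f y z) t)"
              using member_le_sum[of y "cball x R" "\<lambda>y. ind (f x z) (f y z) t"] yc nn NR by auto
            thus ?thesis using True by simp
          qed
        qed
        finally show ?thesis .
      qed
      have "(\<Sum>x\<in>F. (\<epsilon> * ind 0 (f x z) t - (\<Sum>y\<in>cball x R. ind (f x z) (f y z) t)))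
          = \<epsilon> * (\<Sum>x\<in>F. ind 0 (f x z) t) - (\<Sum>x\<in>F. \<Sum>y\<in>cball x R. ind (f x z) (f y z) t)"
        by (simp add: sum_subtractf sum_distrib_left)
      moreover have "\<epsilon> * real (card (E z t \<inter> F)) = \<epsilon> * (\<Sum>x\<in>F. ind 0 (f x z) t)" using c1 by simp
      ultimately show ?thesis using c2 by linarith
    qed
    have intL: "integrable lborel L" unfolding L_def ind_def by (simp add: integrable_Ioc)
    have valL: "integral\<^sup>L lborel L = (\<Sum>z\<in>Z. \<Sum>x\<in>F. (\<epsilon> * f x z - (\<Sum>y\<in>cball x R. max (f y z - f x z) 0)))"
      unfolding L_def ind_def by (simp add: integrable_Ioc integral_Ioc measure_Ioc_max f0)
    have posL: "integral\<^sup>L lborel L > 0"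
    proof -
      have "integral\<^sup>L lborel L = (\<Sum>x\<in>F. (\<epsilon> * (\<Sum>z\<in>Z. f x z) - (\<Sum>y\<in>cball x R. \<Sum>z\<in>Z. max (f y z - f x z) 0)))"
        unfolding valL by (subst sum.swap) (simp add: sum_subtractf sum_distrib_left sum.swap[of _ Z])
      also have "\<dots> > 0"
      proof (rule sum_pos[OF finF Fne])
        fix x assume xF: "x \<in> F"
        have s1: "(\<Sum>z\<in>Z. f x z) = 1" using sum1[OF finZ ballZ[OF xF]] .
        have "(\<Sum>y\<in>cball x R. \<Sum>z\<in>Z. max (f y z - f x z) 0) \<le> (\<Sum>y\<in>cball x R. 3 * \<delta>)"
        proof (rule sum_mono)
          fix y assume "y \<in> cball x R"
          hence dxy: "dist x y < R + 1" by simp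
          have "(\<Sum>z\<in>Z. max (f y z - f x z) 0) \<le> (\<Sum>z\<in>Z. \<bar>f y z - f x z\<bar>)"
            by (rule sum_mono) auto
          thus "(\<Sum>z\<in>Z. max (f y z - f x z) 0) \<le> 3 * \<delta>" using diffb[OF finZ dxy] by linarith
        qed
        also have "\<dots> = real (card (cball x R)) * (3 * \<delta>)" by simp
        also have "\<dots> \<le> real NR * (3 * \<delta>)" using NR d0 by (intro mult_right_mono) auto
        also have "\<dots> < \<epsilon>"
        proof -
          have "real NR * (3 * \<delta>) = 3 * \<epsilon> * real NR / (4 * (real NR + 1))" unfolding \<delta>_def by simp
          also have "\<dots> < \<epsilon>"
          proof -
            have "0 \<le> \<epsilon> * real NR" using e by simp
            moreover have "\<epsilon> * (4 * (real NR + 1)) = 3 * \<epsilon> * real NR + (\<epsilon> * real NR + 4 * \<epsilon>)"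
              by (simp add: algebra_simps)
            ultimately have "3 * \<epsilon> * real NR < \<epsilon> * (4 * (real NR + 1))" using e by linarith
            thus ?thesis by (simp add: divide_less_eq)
          qed
          finally show ?thesis .
        qed
        finally show "0 < \<epsilon> * (\<Sum>z\<in>Z. f x z) - (\<Sum>y\<in>cball x R. \<Sum>z\<in>Z. max (f y z - f x z) 0)"
          using s1 by simp
      qed
      finally show ?thesis .
    qed
    obtain t where Lt: "L t > 0"
    proof (rule ccontr)
      assume "\<not> thesis"
      have Lle: "\<forall>t. L t \<le> 0" using \<open>\<not> thesis\<close> that by (meson not_le)
      have "0 \<le> integral\<^sup>L lborel (\<lambda>t. - L t)"
        using Lle by (intro Bochner_Integration.integral_nonneg) auto
      thus False using posL by simp
    qed
    have "0 < L t" by (rule Lt)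
    also have "L t \<le> (\<Sum>z\<in>Z. (\<epsilon> * real (card (E z t \<inter> F)) - real (card (rbdry UNIV R (E z t) \<inter> F))))"
      unfolding L_def by (rule sum_mono) (rule pw)
    finally have "0 < (\<Sum>z\<in>Z. (\<epsilon> * real (card (E z t \<inter> F)) - real (card (rbdry UNIV R (E z t) \<inter> F))))" .
    then obtain z where zpos: "0 < \<epsilon> * real (card (E z t \<inter> F)) - real (card (rbdry UNIV R (E z t) \<inter> F))"
      by (meson not_le sum_nonpos)
    have "E z t \<noteq> {}"
    proof
      assume "E z t = {}" thus False using zpos by simp
    qed
    show "\<exists>E. bounded E \<and> diameter E \<le> 2 * S \<and>
             real (card (rbdry UNIV R E \<inter> F)) < \<epsilon> * real (card (E \<inter> F))"
    proof (intro exI[of _ "E z t"] conjI)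
      show "bounded (E z t)" using Esub bounded_ball bounded_subset by metis
      show "diameter (E z t) \<le> 2 * S"
      proof (rule diameter_le_metric[OF \<open>E z t \<noteq> {}\<close>])
        fix a b assume "a \<in> E z t" "b \<in> E z t"
        hence "dist z a < S" "dist z b < S" using Esub[of z t] by auto+
        thus "dist a b \<le> 2 * S" using dist_triangle[of a b z] by (simp add: dist_commute)
      qed
      show "real (card (rbdry UNIV R (E z t) \<inter> F)) < \<epsilon> * real (card (E z t \<inter> F))" using zpos by simp
    qed
  qed
qed


theorem theorem4p4:
  fixes Xs :: "nat \<Rightarrow> 'a::metric_space set"
  assumes "bounded_geometry TYPE('a)"
    and "coarse_disjoint_union Xs"
    and "asymptotic_expanders Xs"
  shows "\<not> uniformly_locally_amenable TYPE('a) \<and> \<not> property_A TYPE('a)"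
  using not_ula[OF assms(1) assms(3)] A_imp_ula[OF assms(1)] by blast

end
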